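(* Let $\oplus$ be a basic combinator whose domain is the set of all pairs of tpos over $W$. Then $\oplus$ satisfies both ($\oplus$SPU+) for all $x,y,z \in W$: if $x \prec_1 y$ and $z \prec_2 y$ then $x \prec_{1\oplus 2} y$ or $z \prec_{1\oplus 2} y$, and ($\oplus$PAR) for all $x,y \in W$: if $x \prec_{1\oplus 2} y$ then for each $i \in \{1,2\}$ there exists $z \in W$ with $x \sim_{1\oplus 2} z$ and $z \prec_i y$, (for all pairs $\langle\preceq_1,\preceq_2\rangle$) if and only if $\oplus = \oplus_{\mathrm{STQ}}$.
   Context: $W$ is a finite nonempty set (of possible worlds). A tpo is a total preorder on $W$; $\prec$, $\sim$ its strict and symmetric parts. For $S \subseteq W$, $\min(\preceq, S) = \{x \in S : x \preceq y\ \forall y \in S\}$. A combinator $\oplus$ maps pairs of tpos $\langle\preceq_1,\preceq_2\rangle$ to a tpo $\preceq_{1\oplus 2}$; it is basic if $\min(\preceq_{1\oplus 2}, W) = \min(\preceq_1, W) \cup \min(\preceq_2, W)$ for all pairs. The Synchronous TeamQueue combinator $\oplus_{\mathrm{STQ}}$ maps $\langle\preceq_1,\preceq_2\rangle$ to the tpo whose ordered partition into ranks (most plausible first) is $\langle T_1,\ldots,T_m\rangle$, where $T_i = \min(\preceq_1, R_i) \cup \min(\preceq_2, R_i)$ with $R_i = \bigcap_{k<i} T_k^c$ ($T^c$ the complement in $W$), and $m$ is minimal with $\bigcup_{i\le m} T_i = W$. *)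

theory Defs
  imports Main
begin

text \<open>The set W of worlds is a finite (nonempty, as every type) type 'w.
  Binary relations on W are represented as curried predicates; r x y reads "x \<preceq> y".\<close>

type_synonym 'w rel = "'w \<Rightarrow> 'w \<Rightarrow> bool"

definition tpo :: "'w rel \<Rightarrow> bool" where
  "tpo r \<longleftrightarrow> (\<forall>x y. r x y \<or> r y x) \<and> (\<forall>x y z. r x y \<longrightarrow> r y z \<longrightarrow> r x z)"

definition strict :: "'w rel \<Rightarrow> 'w rel" where
  "strict r x y \<longleftrightarrow> r x y \<and> \<not> r y x"

definition equiv_part :: "'w rel \<Rightarrow> 'w rel" where
  "equiv_part r x y \<longleftrightarrow> r x y \<and> r y x"

definition minset :: "'w rel \<Rightarrow> 'w set \<Rightarrow> 'w set" where
  "minset r S = {x \<in> S. \<forall>y \<in> S. r x y}"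

definition combinator :: "('w rel \<Rightarrow> 'w rel \<Rightarrow> 'w rel) \<Rightarrow> bool" where
  "combinator c \<longleftrightarrow> (\<forall>r1 r2. tpo r1 \<and> tpo r2 \<longrightarrow> tpo (c r1 r2))"

definition basic :: "('w rel \<Rightarrow> 'w rel \<Rightarrow> 'w rel) \<Rightarrow> bool" where
  "basic c \<longleftrightarrow> (\<forall>r1 r2. tpo r1 \<and> tpo r2 \<longrightarrow>
     minset (c r1 r2) UNIV = minset r1 UNIV \<union> minset r2 UNIV)"

definition SPU_plus :: "('w rel \<Rightarrow> 'w rel \<Rightarrow> 'w rel) \<Rightarrow> bool" where
  "SPU_plus c \<longleftrightarrow> (\<forall>r1 r2. tpo r1 \<and> tpo r2 \<longrightarrow>
     (\<forall>x y z. strict r1 x y \<and> strict r2 z y \<longrightarrow>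
        strict (c r1 r2) x y \<or> strict (c r1 r2) z y))"

definition PAR :: "('w rel \<Rightarrow> 'w rel \<Rightarrow> 'w rel) \<Rightarrow> bool" where
  "PAR c \<longleftrightarrow> (\<forall>r1 r2. tpo r1 \<and> tpo r2 \<longrightarrow>
     (\<forall>x y. strict (c r1 r2) x y \<longrightarrow>
        (\<forall>ri \<in> {r1, r2}. \<exists>z. equiv_part (c r1 r2) x z \<and> strict ri z y)))"

text \<open>Synchronous TeamQueue.  stq_R r1 r2 i is R_{i+1} of the paper (0-indexed):
  R_0 = W, R_{i+1} = R_i \<inter> (T_i)^c, which equals \<Inter>_{k\<le>i} (T_k)^c;
  T_i = min(r1,R_i) \<union> min(r2,R_i).\<close>
fun stq_R :: "'w rel \<Rightarrow> 'w rel \<Rightarrow> nat \<Rightarrow> 'w set" where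
  "stq_R r1 r2 0 = UNIV"
| "stq_R r1 r2 (Suc i) = stq_R r1 r2 i - (minset r1 (stq_R r1 r2 i) \<union> minset r2 (stq_R r1 r2 i))"

definition stq_T :: "'w rel \<Rightarrow> 'w rel \<Rightarrow> nat \<Rightarrow> 'w set" where
  "stq_T r1 r2 i = minset r1 (stq_R r1 r2 i) \<union> minset r2 (stq_R r1 r2 i)"

definition stq_rank :: "'w rel \<Rightarrow> 'w rel \<Rightarrow> 'w \<Rightarrow> nat" where
  "stq_rank r1 r2 x = (LEAST i. x \<in> stq_T r1 r2 i)"

definition STQ :: "'w rel \<Rightarrow> 'w rel \<Rightarrow> 'w rel" where
  "STQ r1 r2 x y \<longleftrightarrow> stq_rank r1 r2 x \<le> stq_rank r1 r2 y"

end

theory Submission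
  imports Defs
begin

lemma min_ne:
  assumes "finite S" "S \<noteq> {}" "tpo r"
  shows "minset r S \<noteq> {}"
  using assms(1,2)
proof (induction S rule: finite_ne_induct)
  case (singleton x)
  then show ?case using assms(3) by (auto simp: minset_def tpo_def)
next
  case (insert x F)
  then obtain m where m: "m \<in> minset r F" by auto
  show ?case
  proof (cases "r x m")
    case True
    then have "x \<in> minset r (insert x F)" using m assms(3)
      unfolding minset_def tpo_def by blast
    then show ?thesis by auto
  next
    case False
    then have "r m x" using assms(3) unfolding tpo_def by blast
    then have "m \<in> minset r (insert x F)" using m assms(3)
      unfolding minset_def tpo_def by blast
    then show ?thesis by auto
  qed
qed

lemma R_Suc_iff: "x \<in> stq_R r1 r2 (Suc i) \<longleftrightarrow> x \<in> stq_R r1 r2 i \<and> x \<notin> stq_T r1 r2 i"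
  by (simp add: stq_T_def)

lemma R_iff: "x \<in> stq_R r1 r2 i \<longleftrightarrow> (\<forall>k<i. x \<notin> stq_T r1 r2 k)"
  by (induction i) (auto simp del: stq_R.simps(2) simp: R_Suc_iff less_Suc_eq)

lemma T_sub_R: "stq_T r1 r2 i \<subseteq> stq_R r1 r2 i"
  by (auto simp: stq_T_def minset_def)

lemma T_ne: "tpo r1 \<Longrightarrow> stq_R r1 r2 i \<noteq> {} \<Longrightarrow> stq_T (r1::'w::finite rel) r2 i \<noteq> {}"
  using min_ne[of "stq_R r1 r2 i" r1] by (auto simp: stq_T_def)

lemma card_R:
  assumes "tpo (r1::'w::finite rel)"
  shows "stq_R r1 r2 i \<noteq> {} \<Longrightarrow> card (stq_R r1 r2 i) + i \<le> card (UNIV::'w set)"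
proof (induction i)
  case 0
  then show ?case by simp
next
  case (Suc i)
  have sub: "stq_R r1 r2 (Suc i) \<subseteq> stq_R r1 r2 i" by auto
  then have ne: "stq_R r1 r2 i \<noteq> {}" using Suc.prems by auto
  have "stq_T r1 r2 i \<noteq> {}" using T_ne[OF assms ne] .
  then have "stq_R r1 r2 (Suc i) \<subset> stq_R r1 r2 i"
    using T_sub_R[of r1 r2 i] by (auto simp: stq_T_def)
  then have "card (stq_R r1 r2 (Suc i)) < card (stq_R r1 r2 i)"
    by (simp add: psubset_card_mono)
  then show ?case using Suc.IH[OF ne] by simp
qed

lemma ex_T:
  assumes "tpo (r1::'w::finite rel)"
  shows "\<exists>i. x \<in> stq_T r1 r2 i"
proof (rule ccontr)
  assume "\<not> ?thesis"
  then have "x \<in> stq_R r1 r2 (Suc (card (UNIV::'w set)))" by (simp del: stq_R.simps add: R_iff)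
  then have "stq_R r1 r2 (Suc (card (UNIV::'w set))) \<noteq> {}" by auto
  from card_R[OF assms this] show False by simp
qed

lemma rank_T: "tpo (r1::'w::finite rel) \<Longrightarrow> x \<in> stq_T r1 r2 (stq_rank r1 r2 x)"
  unfolding stq_rank_def using ex_T by (metis LeastI_ex)

lemma rank_le: "x \<in> stq_T r1 r2 k \<Longrightarrow> stq_rank r1 r2 x \<le> k"
  unfolding stq_rank_def by (rule Least_le)

lemma R_rank:
  assumes "tpo (r1::'w::finite rel)"
  shows "x \<in> stq_R r1 r2 i \<longleftrightarrow> i \<le> stq_rank r1 r2 x"
  unfolding R_iff using rank_T[OF assms] rank_le
  by (meson le_trans not_le)

lemma T_rank:
  assumes "tpo (r1::'w::finite rel)"
  shows "x \<in> stq_T r1 r2 i \<longleftrightarrow> i = stq_rank r1 r2 x"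
  using rank_T[OF assms] rank_le R_rank[OF assms] T_sub_R
  by (metis le_antisym subsetD)

lemma strict_trans1: "tpo r \<Longrightarrow> r x w \<Longrightarrow> strict r w y \<Longrightarrow> strict r x y"
  unfolding tpo_def strict_def by blast

lemma exists_strict_below:
  assumes "tpo (r::'w::finite rel)" "y \<in> S" "y \<notin> minset r S"
  shows "\<exists>w \<in> minset r S. strict r w y"
proof -
  obtain w where w: "w \<in> minset r S" using min_ne[of S r] assms by auto
  obtain v where v: "v \<in> S" "\<not> r y v" using assms(2,3) by (auto simp: minset_def)
  have "r w v" using w v by (auto simp: minset_def)
  then have "\<not> r y w" using v assms(1) unfolding tpo_def by blast
  then show ?thesis using w assms(1) unfolding strict_def tpo_def by blast
qed

lemma STQ_props:
  assumes t1: "tpo (r1::'w::finite rel)" and t2: "tpo r2"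
  shows "tpo (STQ r1 r2)"
    and "\<forall>x y z. strict r1 x y \<and> strict r2 z y \<longrightarrow> strict (STQ r1 r2) x y \<or> strict (STQ r1 r2) z y"
    and "\<forall>x y. strict (STQ r1 r2) x y \<longrightarrow> (\<forall>ri \<in> {r1, r2}. \<exists>z. equiv_part (STQ r1 r2) x z \<and> strict ri z y)"
proof -
  let ?rk = "stq_rank r1 r2"
  show "tpo (STQ r1 r2)" by (auto simp: tpo_def STQ_def)
  show "\<forall>x y z. strict r1 x y \<and> strict r2 z y \<longrightarrow> strict (STQ r1 r2) x y \<or> strict (STQ r1 r2) z y"
  proof (intro allI impI)
    fix x y z assume h: "strict r1 x y \<and> strict r2 z y"
    show "strict (STQ r1 r2) x y \<or> strict (STQ r1 r2) z y"
    proof (rule ccontr)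
      assume "\<not> ?thesis"
      then have a: "?rk y \<le> ?rk x" "?rk y \<le> ?rk z" by (auto simp: strict_def STQ_def)
      let ?i = "?rk y"
      have xR: "x \<in> stq_R r1 r2 ?i" "z \<in> stq_R r1 r2 ?i" using a R_rank[OF t1] by auto
      have "y \<in> stq_T r1 r2 ?i" using rank_T[OF t1] .
      then show False using xR h by (auto simp: stq_T_def minset_def strict_def)
    qed
  qed
  show "\<forall>x y. strict (STQ r1 r2) x y \<longrightarrow> (\<forall>ri \<in> {r1, r2}. \<exists>z. equiv_part (STQ r1 r2) x z \<and> strict ri z y)"
  proof (intro allI impI ballI)
    fix x y ri assume s: "strict (STQ r1 r2) x y" and ri: "ri \<in> {r1, r2}"
    then have lt: "?rk x < ?rk y" by (auto simp: strict_def STQ_def)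
    let ?i = "?rk x"
    have yR: "y \<in> stq_R r1 r2 ?i" using lt R_rank[OF t1] by auto
    have tri: "tpo ri" using ri t1 t2 by auto
    have yT: "y \<notin> stq_T r1 r2 ?i" using lt T_rank[OF t1] by auto
    then have "y \<notin> minset ri (stq_R r1 r2 ?i)" using ri by (auto simp: stq_T_def)
    then obtain z where z: "z \<in> minset ri (stq_R r1 r2 ?i)" "strict ri z y"
      using exists_strict_below[OF tri yR] by blast
    have "z \<in> stq_T r1 r2 ?i" using z ri by (auto simp: stq_T_def)
    then have "?rk z = ?i" using T_rank[OF t1] by auto
    then have "equiv_part (STQ r1 r2) x z" by (auto simp: equiv_part_def STQ_def)
    then show "\<exists>z. equiv_part (STQ r1 r2) x z \<and> strict ri z y"
      using z by blast
  qed
qed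

lemma main_dir:
  fixes c :: "'w::finite rel \<Rightarrow> 'w rel \<Rightarrow> 'w rel"
  assumes comb: "combinator c" and spu: "SPU_plus c" and par: "PAR c"
    and t1: "tpo r1" and t2: "tpo r2"
  shows "c r1 r2 = STQ r1 r2"
proof -
  let ?rk = "stq_rank r1 r2"
  let ?c = "c r1 r2"
  have tc: "tpo ?c" using comb t1 t2 by (auto simp: combinator_def)
  have SP: "\<And>x y z. strict r1 x y \<Longrightarrow> strict r2 z y \<Longrightarrow> strict ?c x y \<or> strict ?c z y"
    using spu t1 t2 unfolding SPU_plus_def by blast
  have PA: "\<And>x y ri. strict ?c x y \<Longrightarrow> ri \<in> {r1, r2} \<Longrightarrow> \<exists>z. equiv_part ?c x z \<and> strict ri z y"
    using par t1 t2 unfolding PAR_def by blast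
  have P: "\<forall>x y. ?rk x = n \<longrightarrow> (n \<le> ?rk y \<longrightarrow> ?c x y) \<and> (n < ?rk y \<longrightarrow> strict ?c x y)" for n
  proof (induction n rule: less_induct)
    case (less n)
    have NS: "?c x y" if xn: "?rk x = n" and yn: "n \<le> ?rk y" for x y
    proof (rule ccontr)
      assume nc: "\<not> ?c x y"
      then have syx: "strict ?c y x" using tc by (auto simp: tpo_def strict_def)
      have xT: "x \<in> stq_T r1 r2 n" using xn T_rank[OF t1] by auto
      then obtain ri where ri: "ri \<in> {r1, r2}" "x \<in> minset ri (stq_R r1 r2 n)"
        by (auto simp: stq_T_def)
      obtain z where z: "equiv_part ?c y z" "strict ri z x" using PA[OF syx ri(1)] by blast
      have "n \<le> ?rk z"
      proof (rule ccontr)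
        assume "\<not> n \<le> ?rk z"
        then have "?rk z < n" by simp
        with less.IH[of "?rk z"] have "strict ?c z y" using yn by auto
        then show False using z(1) by (auto simp: strict_def equiv_part_def)
      qed
      then have "z \<in> stq_R r1 r2 n" using R_rank[OF t1] by auto
      then have "ri x z" using ri(2) by (auto simp: minset_def)
      then show False using z(2) by (auto simp: strict_def)
    qed
    have ST: "strict ?c x y" if xn: "?rk x = n" and yn: "n < ?rk y" for x y
    proof -
      have yR: "y \<in> stq_R r1 r2 n" using yn R_rank[OF t1] by auto
      have yT: "y \<notin> stq_T r1 r2 n" using yn T_rank[OF t1] by auto
      obtain w1 where w1: "w1 \<in> minset r1 (stq_R r1 r2 n)" "strict r1 w1 y"
        using exists_strict_below[OF t1 yR] yT by (auto simp: stq_T_def)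
      obtain w2 where w2: "w2 \<in> minset r2 (stq_R r1 r2 n)" "strict r2 w2 y"
        using exists_strict_below[OF t2 yR] yT by (auto simp: stq_T_def)
      have "w1 \<in> stq_T r1 r2 n" "w2 \<in> stq_T r1 r2 n" using w1(1) w2(1)
        by (auto simp: stq_T_def)
      then have "?rk w1 = n" "?rk w2 = n" using T_rank[OF t1] by auto
      then have "?c x w1" "?c x w2" using NS xn by auto
      then show ?thesis using SP[OF w1(2) w2(2)] strict_trans1[OF tc] by blast
    qed
    show ?case using NS ST by blast
  qed
  show ?thesis
  proof (intro ext)
    fix x y
    show "?c x y = STQ r1 r2 x y"
    proof (cases "?rk x \<le> ?rk y")
      case True
      then show ?thesis using P[of "?rk x"] by (auto simp: STQ_def)
    next
      case False
      then have "strict ?c y x" using P[of "?rk y"] by auto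
      then show ?thesis using False by (auto simp: STQ_def strict_def)
    qed
  qed
qed

theorem theorem2:
  fixes c :: "'w::finite rel \<Rightarrow> 'w rel \<Rightarrow> 'w rel"
  assumes "combinator c"
    and "basic c"
  shows "(SPU_plus c \<and> PAR c) \<longleftrightarrow> (\<forall>r1 r2. tpo r1 \<and> tpo r2 \<longrightarrow> c r1 r2 = STQ r1 r2)"
proof
  assume "SPU_plus c \<and> PAR c"
  then show "\<forall>r1 r2. tpo r1 \<and> tpo r2 \<longrightarrow> c r1 r2 = STQ r1 r2"
    using main_dir[OF assms(1)] by blast
next
  assume h: "\<forall>r1 r2. tpo r1 \<and> tpo r2 \<longrightarrow> c r1 r2 = STQ r1 r2"
  have "SPU_plus c" unfolding SPU_plus_def
  proof (rule allI, rule allI, rule impI)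
    fix r1 r2 :: "'w rel" assume t: "tpo r1 \<and> tpo r2"
    then have e: "c r1 r2 = STQ r1 r2" using h by blast
    from STQ_props(2)[of r1 r2] t show
      "\<forall>x y z. strict r1 x y \<and> strict r2 z y \<longrightarrow> strict (c r1 r2) x y \<or> strict (c r1 r2) z y"
      by (simp add: e)
  qed
  moreover have "PAR c" unfolding PAR_def
  proof (rule allI, rule allI, rule impI)
    fix r1 r2 :: "'w rel" assume t: "tpo r1 \<and> tpo r2"
    then have e: "c r1 r2 = STQ r1 r2" using h by blast
    from STQ_props(3)[of r1 r2] t show
      "\<forall>x y. strict (c r1 r2) x y \<longrightarrow> (\<forall>ri\<in>{r1, r2}. \<exists>z. equiv_part (c r1 r2) x z \<and> strict ri z y)"
      by (simp add: e)
  qed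
  ultimately show "SPU_plus c \<and> PAR c" by blast
qed

end
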